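(* Let $h,v$ be permutations of $\Lambda=\{1,\dots,d\}$ and let $(\lambda_n,\epsilon_n)_{n\in\mathbb{Z}}$ be a combinatorial lift of a Sturmian sequence $\epsilon\in\{H,V\}^{\mathbb{Z}}$. Let $M$ be the minimal number of $H$'s between two consecutive $V$'s in $\epsilon$, let $(n_i)_{i\in\mathbb{Z}}$ be the increasing enumeration of the indices $n$ with $\epsilon_n=V$, and set $\mu_i=\lambda_{n_i}$, $\sigma_i=L$ if $n_{i+1}-n_i=M+1$ and $\sigma_i=R$ if $n_{i+1}-n_i=M+2$. Then the sequence $(\mu_i,\sigma_i)_{i\in\mathbb{Z}}$ is minimal.
   Context: A Sturmian sequence is a biinfinite sequence over two letters that is not eventually periodic and has exactly $n+1$ distinct subwords of each length $n$; in a Sturmian cutting sequence every block of $H$'s between consecutive $V$'s has length $M$ or $M+1$. A combinatorial lift of $\epsilon$ (a cutting sequence of a geodesic on the square torus, whose top/bottom edge is labeled $V$ and left/right edges $H$) is a sequence $(\lambda_n,\epsilon_n)$ with $\lambda_{n+1}=h(\lambda_n)$ if $\epsilon_{n+1}=H$ and $\lambda_{n+1}=v(\lambda_n)$ if $\epsilon_{n+1}=V$. A biinfinite sequence is minimal if for every finite word $w$ occurring in it there is $N$ such that every subword of length at least $N$ contains $w$. *)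

theory Defs
  imports "HOL-Combinatorics.Permutations"
begin

datatype letter = H | V
datatype side = L | R

definition subwords :: "(int \<Rightarrow> 'a) \<Rightarrow> nat \<Rightarrow> 'a list set" where
  "subwords s n = {map (\<lambda>i. s (k + int i)) [0..<n] | k. True}"

definition eventually_periodic_right :: "(int \<Rightarrow> 'a) \<Rightarrow> bool" where
  "eventually_periodic_right s \<longleftrightarrow> (\<exists>p>0. \<exists>N. \<forall>n\<ge>N. s (n + p) = s n)"

definition eventually_periodic_left :: "(int \<Rightarrow> 'a) \<Rightarrow> bool" where
  "eventually_periodic_left s \<longleftrightarrow> (\<exists>p>0. \<exists>N. \<forall>n\<le>N. s (n - p) = s n)"

definition sturmian :: "(int \<Rightarrow> letter) \<Rightarrow> bool" where
  "sturmian s \<longleftrightarrow> \<not> eventually_periodic_right s \<and> \<not> eventually_periodic_left s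
     \<and> (\<forall>n. card (subwords s n) = n + 1)"

definition comb_lift :: "nat \<Rightarrow> (nat \<Rightarrow> nat) \<Rightarrow> (nat \<Rightarrow> nat) \<Rightarrow> (int \<Rightarrow> letter) \<Rightarrow> (int \<Rightarrow> nat) \<Rightarrow> bool" where
  "comb_lift d h v eps lam \<longleftrightarrow> (\<forall>n. lam n \<in> {1..d}) \<and>
     (\<forall>n. lam (n + 1) = (if eps (n + 1) = H then h (lam n) else v (lam n)))"

definition occurs_at :: "'a list \<Rightarrow> (int \<Rightarrow> 'a) \<Rightarrow> int \<Rightarrow> bool" where
  "occurs_at w s k \<longleftrightarrow> (\<forall>j<length w. s (k + int j) = w ! j)"

definition minimal_seq :: "(int \<Rightarrow> 'a) \<Rightarrow> bool" where
  "minimal_seq s \<longleftrightarrow> (\<forall>w. (\<exists>k. occurs_at w s k) \<longrightarrow>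
     (\<exists>N::nat. \<forall>a::int. \<forall>m::nat. m \<ge> N \<longrightarrow>
        (\<exists>k. a \<le> k \<and> k + int (length w) \<le> a + int m \<and> occurs_at w s k)))"

end

theory Submission
  imports Defs
begin
lemma letter_cases2: "(c::letter) \<noteq> d \<Longrightarrow> e = c \<or> e = d"
  by (cases c; cases d; cases e) auto

locale stu =
  fixes eps :: "int \<Rightarrow> letter"
  assumes st: "sturmian eps"
begin

definition fw :: "int \<Rightarrow> nat \<Rightarrow> letter list" where
  "fw i n = map (\<lambda>t. eps (i + int t)) [0..<n]"

lemma fw_Suc: "fw i (Suc n) = fw i n @ [eps (i + int n)]"
  by (simp add: fw_def)

lemma fw_eq_iff: "fw i n = fw j n \<longleftrightarrow> (\<forall>t<n. eps (i + int t) = eps (j + int t))"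
  by (auto simp: fw_def)

lemma fw_in: "fw i n \<in> subwords eps n"
  by (auto simp: fw_def subwords_def)

lemma sub_card: "card (subwords eps n) = n + 1"
  using st by (simp add: sturmian_def)

lemma sub_fin: "finite (subwords eps n)"
  using sub_card[of n] card.infinite by fastforce

lemma sub_fw: "x \<in> subwords eps n \<Longrightarrow> \<exists>k. x = fw k n"
  by (auto simp: fw_def subwords_def)

lemma ext_in:
  assumes "fw i m = fw j m" "eps (i + int m) \<noteq> eps (j + int m)"
  shows "fw i m @ [c] \<in> subwords eps (Suc m)"
proof -
  have "c = eps (i + int m) \<or> c = eps (j + int m)" using letter_cases2 assms(2) by blast
  then show ?thesis
  proof
    assume "c = eps (i + int m)" then show ?thesis using fw_in[of i "Suc m"] by (simp add: fw_Suc)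
  next
    assume "c = eps (j + int m)" then show ?thesis using fw_in[of j "Suc m"] assms(1) by (simp add: fw_Suc)
  qed
qed

lemma RS_unique:
  assumes "fw i m = fw j m" "eps (i + int m) \<noteq> eps (j + int m)"
    "fw i' m = fw j' m" "eps (i' + int m) \<noteq> eps (j' + int m)"
  shows "fw i m = fw i' m"
proof (rule ccontr)
  assume ne: "fw i m \<noteq> fw i' m"
  define X where "X = fw i m"
  define Y where "Y = fw i' m"
  define S' where "S' = subwords eps (Suc m)"
  define A where "A = S' - {X @ [H], Y @ [H]}"
  have XH: "X @ [c] \<in> S'" for c using ext_in[OF assms(1,2)] X_def S'_def by simp
  have YH: "Y @ [c] \<in> S'" for c using ext_in[OF assms(3,4)] Y_def S'_def by simp
  have XY: "X \<noteq> Y" using ne X_def Y_def by simp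
  have fS': "finite S'" using sub_fin S'_def by simp
  have cA: "card A = card S' - 2"
    using XH YH XY fS' unfolding A_def by (simp add: card_Diff_subset)
  have sub: "subwords eps m \<subseteq> butlast ` A"
  proof
    fix Z assume "Z \<in> subwords eps m"
    then obtain p where Z: "Z = fw p m" using sub_fw by blast
    show "Z \<in> butlast ` A"
    proof (cases "Z = X \<or> Z = Y")
      case True
      then show ?thesis
      proof
        assume "Z = X"
        then have "X @ [V] \<in> A" using XH XY unfolding A_def by auto
        then show ?thesis using \<open>Z = X\<close> by (metis butlast_snoc image_eqI)
      next
        assume "Z = Y"
        then have "Y @ [V] \<in> A" using YH XY unfolding A_def by auto
        then show ?thesis using \<open>Z = Y\<close> by (metis butlast_snoc image_eqI)
      qed
    next
      case False
      have "fw p (Suc m) \<in> A" using False fw_in[of p "Suc m"] unfolding A_def S'_def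
        by (auto simp: fw_Suc Z)
      then show ?thesis by (metis Z butlast_snoc fw_Suc image_eqI)
    qed
  qed
  have "card (subwords eps m) \<le> card (butlast ` A)"
    using sub fS' A_def by (intro card_mono) auto
  also have "\<dots> \<le> card A" by (rule card_image_le) (use fS' A_def in auto)
  finally show False using cA sub_card[of m] sub_card[of "Suc m"] S'_def by simp
qed

end

context stu begin

definition per :: "nat \<Rightarrow> int \<Rightarrow> nat \<Rightarrow> bool" where
  "per q b len \<longleftrightarrow> (\<forall>x. b \<le> x \<and> x < b + int len \<longrightarrow> eps x = eps (x + int q))"

definition det :: "nat \<Rightarrow> int \<Rightarrow> nat \<Rightarrow> bool" where
  "det n a len \<longleftrightarrow> (\<forall>i i'. a \<le> i \<longrightarrow> i < a + int len \<longrightarrow> a \<le> i' \<longrightarrow> i' < a + int len \<longrightarrow>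
      fw i n = fw i' n \<longrightarrow> eps (i + int n) = eps (i' + int n))"

lemma pigeon_window:
  "\<exists>t1 t2. t1 < t2 \<and> t2 \<le> n + 1 \<and> fw (a + int t1) n = fw (a + int t2) n"
proof (rule ccontr)
  assume H: "\<not> ?thesis"
  have "inj_on (\<lambda>t. fw (a + int t) n) {0..<n+2}"
  proof (rule inj_onI)
    fix x y assume "x \<in> {0..<n+2}" "y \<in> {0..<n+2}" "fw (a + int x) n = fw (a + int y) n"
    then show "x = y"
    proof -
      assume a1: "x \<in> {0..<n+2}" "y \<in> {0..<n+2}" "fw (a + int x) n = fw (a + int y) n"
      have "\<not> x < y" using H a1 by auto
      moreover have "\<not> y < x" using H a1(1,2) a1(3)[symmetric] by auto
      ultimately show ?thesis by simp
    qed
  qed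
  then have "card ((\<lambda>t. fw (a + int t) n) ` {0..<n+2}) = n + 2" by (simp add: card_image)
  moreover have "(\<lambda>t. fw (a + int t) n) ` {0..<n+2} \<subseteq> subwords eps n" using fw_in by auto
  ultimately have "n + 2 \<le> card (subwords eps n)" using sub_fin by (metis card_mono)
  then show False using sub_card[of n] by simp
qed

lemma det_per:
  assumes d: "det n a len" and len: "len \<ge> n + 2" and n: "n \<ge> 1"
  shows "\<exists>q b. 1 \<le> q \<and> q \<le> n + 1 \<and> per q b (len - 2)"
proof -
  obtain t1 t2 where t: "t1 < t2" "t2 \<le> n + 1" "fw (a + int t1) n = fw (a + int t2) n"
    using pigeon_window by blast
  define i where "i = a + int t1"
  define j where "j = a + int t2"
  define q where "q = t2 - t1"
  have jq: "j = i + int q" using t(1) by (simp add: i_def j_def q_def)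
  have claim: "t2 + s \<le> len - 1 \<longrightarrow> (\<forall>t<n. eps (i + int s + int t) = eps (j + int s + int t))" for s
  proof (induction s)
    case 0
    then show ?case using t(3) by (simp add: fw_eq_iff i_def j_def)
  next
    case (Suc s)
    show ?case
    proof
      assume h: "t2 + Suc s \<le> len - 1"
      then have IH: "\<forall>t<n. eps (i + int s + int t) = eps (j + int s + int t)" using Suc by simp
      have ext: "eps (i + int s + int n) = eps (j + int s + int n)"
      proof -
        have "fw (i + int s) n = fw (j + int s) n" using IH by (simp add: fw_eq_iff add.assoc)
        moreover have "a \<le> i + int s" "i + int s < a + int len" "a \<le> j + int s" "j + int s < a + int len"
          using h t len by (auto simp: i_def j_def)
        ultimately show ?thesis using d unfolding det_def by blast
      qed
      show "\<forall>t<n. eps (i + int (Suc s) + int t) = eps (j + int (Suc s) + int t)"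
      proof (intro allI impI)
        fix t assume "t < n"
        show "eps (i + int (Suc s) + int t) = eps (j + int (Suc s) + int t)"
        proof (cases "Suc t < n")
          case True
          then show ?thesis using IH[rule_format, of "Suc t"] by (simp add: algebra_simps)
        next
          case False
          then have "Suc t = n" using \<open>t < n\<close> by simp
          then show ?thesis using ext by (simp add: \<open>Suc t = n\<close>[symmetric] algebra_simps)
        qed
      qed
    qed
  qed
  have "per q i (len - 2)"
    unfolding per_def
  proof (intro allI impI)
    fix x assume x: "i \<le> x \<and> x < i + int (len - 2)"
    define dd where "dd = nat (x - i)"
    have xd: "x = i + int dd" using x dd_def by simp
    have ddL: "dd < len - 2" using x xd by simp
    show "eps x = eps (x + int q)"
    proof (cases "t2 + dd \<le> len - 1")
      case True
      then show ?thesis using claim[of dd] n by (auto simp: xd jq algebra_simps)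
    next
      case False
      define s where "s = len - 1 - t2"
      define tt where "tt = dd - s"
      have "t2 + s \<le> len - 1" using len t(2) by (simp add: s_def)
      moreover have "tt < n" using False ddL t(2) len by (simp add: s_def tt_def)
      moreover have "dd = s + tt" using False by (simp add: s_def tt_def)
      ultimately show ?thesis using claim[of s] by (auto simp: xd jq algebra_simps)
    qed
  qed
  moreover have "1 \<le> q" "q \<le> n + 1" using t by (auto simp: q_def)
  ultimately show ?thesis by blast
qed

end

context stu begin

lemma nrp: "q \<ge> 1 \<Longrightarrow> \<exists>n\<ge>N. eps (n + int q) \<noteq> eps n"
  using st unfolding sturmian_def eventually_periodic_right_def
  by (metis (no_types, lifting) linorder_not_le of_nat_0_less_iff less_le_trans zero_less_one)

lemma no_long_per:
  assumes q: "q \<ge> 1"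
  shows "\<exists>len. \<forall>b. \<not> per q b len"
proof (rule ccontr)
  assume "\<not> ?thesis"
  then have P: "\<forall>len. \<exists>b. per q b len" by blast
  have RSa: "\<exists>i i'. fw i m = fw i' m \<and> eps (i + int m) \<noteq> eps (i' + int m) \<and>
      (\<forall>t. t + q < m \<longrightarrow> eps (i + int t) = eps (i + int t + int q))" for m
  proof -
    obtain b where b: "per q b (m + q)" using P by blast
    obtain n where n: "n \<ge> b" "eps (n + int q) \<noteq> eps n" using nrp[OF q] by blast
    define D where "D = {d::nat. eps (b + int d + int q) \<noteq> eps (b + int d)}"
    have "nat (n - b) \<in> D" using n by (simp add: D_def)
    then have d0D: "(LEAST d. d \<in> D) \<in> D" by (rule LeastI)
    define d0 where "d0 = (LEAST d. d \<in> D)"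
    have lt: "d < d0 \<Longrightarrow> eps (b + int d + int q) = eps (b + int d)" for d
      using not_less_Least[of d "\<lambda>d. d \<in> D"] by (auto simp: D_def d0_def)
    have d0m: "d0 \<ge> m + q"
    proof (rule ccontr)
      assume "\<not> d0 \<ge> m + q"
      then have "eps (b + int d0) = eps (b + int d0 + int q)" using b unfolding per_def by auto
      then show False using d0D by (simp add: D_def d0_def)
    qed
    define i' where "i' = b + int d0 - int m"
    define i where "i = b + int d0 + int q - int m"
    have "fw i m = fw i' m" unfolding fw_eq_iff
    proof (intro allI impI)
      fix t assume t: "t < m"
      have "eps (b + int (d0 - m + t) + int q) = eps (b + int (d0 - m + t))" using lt[of "d0 - m + t"] t d0m by simp
      then show "eps (i + int t) = eps (i' + int t)" using t d0m
        by (simp add: i_def i'_def algebra_simps of_nat_diff)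
    qed
    moreover have "eps (i + int m) \<noteq> eps (i' + int m)"
    proof -
      have "d0 \<in> D" using d0D d0_def by simp
      then show ?thesis by (simp add: D_def i_def i'_def algebra_simps)
    qed
    moreover have "\<forall>t. t + q < m \<longrightarrow> eps (i + int t) = eps (i + int t + int q)"
    proof (intro allI impI)
      fix t assume t: "t + q < m"
      have "eps (b + int (d0 + q - m + t) + int q) = eps (b + int (d0 + q - m + t))" using lt[of "d0 + q - m + t"] t d0m by simp
      then show "eps (i + int t) = eps (i + int t + int q)" using t d0m
        by (simp add: i_def algebra_simps of_nat_diff)
    qed
    ultimately show ?thesis by blast
  qed
  have RSb: "fw j m = fw j' m \<Longrightarrow> eps (j + int m) \<noteq> eps (j' + int m) \<Longrightarrow> t + q < m \<Longrightarrow>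
      eps (j + int t) = eps (j + int t + int q)" for j j' m t
  proof -
    assume a: "fw j m = fw j' m" "eps (j + int m) \<noteq> eps (j' + int m)" "t + q < m"
    obtain i i' where ii: "fw i m = fw i' m" "eps (i + int m) \<noteq> eps (i' + int m)"
      "\<forall>t. t + q < m \<longrightarrow> eps (i + int t) = eps (i + int t + int q)" using RSa by blast
    have "fw j m = fw i m" using RS_unique[OF a(1,2) ii(1,2)] .
    then have "\<forall>t<m. eps (j + int t) = eps (i + int t)" by (simp add: fw_eq_iff)
    then show ?thesis using ii(3) a(3)
      by (metis add_lessD1 add.commute add.left_commute of_nat_add)
  qed
  have RSc: "eps b1 \<noteq> eps (b1 + int q) \<Longrightarrow> fw b1 (q+1) = fw b2 (q+1) \<Longrightarrow> eps (b1 + int s) = eps (b2 + int s)"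
    for b1 b2 s
  proof (induction s rule: less_induct)
    case (less s)
    show ?case
    proof (cases "s \<le> q")
      case True
      then show ?thesis using less.prems(2) by (simp add: fw_eq_iff)
    next
      case False
      have "fw b1 s = fw b2 s" using less by (simp add: fw_eq_iff)
      show ?thesis
      proof (rule ccontr)
        assume "eps (b1 + int s) \<noteq> eps (b2 + int s)"
        then have "eps (b1 + int 0) = eps (b1 + int 0 + int q)"
          using RSb[OF \<open>fw b1 s = fw b2 s\<close>, of 0] False by simp
        then show False using less.prems(1) by simp
      qed
    qed
  qed
  define Br where "Br = {n. eps (n + int q) \<noteq> eps n}"
  have infBr: "infinite Br"
  proof
    assume f: "finite Br"
    obtain n where n: "n \<ge> Max Br + 1" "eps (n + int q) \<noteq> eps n" using nrp[OF q] by blast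
    then have "n \<in> Br" by (simp add: Br_def)
    then show False using Max_ge[OF f, of n] n(1) by simp
  qed
  have "\<not> inj_on (\<lambda>n. fw n (q+1)) Br"
  proof
    assume "inj_on (\<lambda>n. fw n (q+1)) Br"
    moreover have "finite ((\<lambda>n. fw n (q+1)) ` Br)"
      using sub_fin[of "q+1"] fw_in by (metis (no_types, lifting) finite_subset image_subsetI)
    ultimately show False using infBr finite_imageD by blast
  qed
  then obtain b1 b2 where bb: "b1 \<in> Br" "b2 \<in> Br" "b1 \<noteq> b2" "fw b1 (q+1) = fw b2 (q+1)"
    unfolding inj_on_def by blast
  have "\<exists>c1 c2. c1 < c2 \<and> c1 \<in> Br \<and> fw c1 (q+1) = fw c2 (q+1)"
  proof (cases "b1 < b2")
    case True then show ?thesis using bb by blast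
  next
    case False then show ?thesis using bb by (metis linorder_neqE)
  qed
  then obtain c1 c2 where cc: "c1 < c2" "c1 \<in> Br" "fw c1 (q+1) = fw c2 (q+1)" by blast
  have key: "eps (n + (c2 - c1)) = eps n" if "n \<ge> c1" for n
  proof -
    have "eps c1 \<noteq> eps (c1 + int q)" using cc(2) by (simp add: Br_def eq_commute)
    then have "eps (c1 + int (nat (n - c1))) = eps (c2 + int (nat (n - c1)))"
      using RSc[of c1 c2] cc(3) by blast
    then show ?thesis using that by (simp add: algebra_simps)
  qed
  have "eventually_periodic_right eps"
    unfolding eventually_periodic_right_def using key cc(1)
    by (metis diff_gt_0_iff_gt)
  then show False using st by (simp add: sturmian_def)
qed

end

context stu begin

lemma per_mono: "per q b l1 \<Longrightarrow> l2 \<le> l1 \<Longrightarrow> per q b l2"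
  unfolding per_def by force

lemma no_long_det:
  assumes n: "n \<ge> 1"
  shows "\<exists>W. \<forall>a len. len \<ge> W \<longrightarrow> \<not> det n a len"
proof -
  have "\<forall>q. \<exists>l. q \<ge> 1 \<longrightarrow> (\<forall>b. \<not> per q b l)" using no_long_per by blast
  then obtain Lf where Lf: "\<And>q b. q \<ge> 1 \<Longrightarrow> \<not> per q b (Lf q)" by metis
  define W where "W = (\<Sum>q\<in>{1..n+1}. Lf q) + n + 2"
  have "\<not> det n a len" if "len \<ge> W" for a len
  proof
    assume dl: "det n a len"
    have ln: "len \<ge> n + 2" using that W_def by simp
    obtain q b where qb: "1 \<le> q" "q \<le> n + 1" "per q b (len - 2)"
      using det_per[OF dl ln n] by blast
    have "Lf q \<le> (\<Sum>q\<in>{1..n+1}. Lf q)" using qb by (intro member_le_sum) auto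
    then have "Lf q \<le> len - 2" using that W_def by simp
    then have "per q b (Lf q)" using per_mono qb(3) by blast
    then show False using Lf qb(1) by blast
  qed
  then show ?thesis by blast
qed

lemma min_eps: "minimal_seq eps"
  unfolding minimal_seq_def
proof (intro allI impI)
  fix w assume "\<exists>k. occurs_at w eps k"
  then obtain k where k: "occurs_at w eps k" by blast
  define n where "n = length w"
  show "\<exists>N. \<forall>a m. N \<le> m \<longrightarrow> (\<exists>k. a \<le> k \<and> k + int (length w) \<le> a + int m \<and> occurs_at w eps k)"
  proof (cases "n = 0")
    case True
    then show ?thesis by (intro exI[of _ 0]) (auto simp: occurs_at_def n_def)
  next
    case False
    then have n1: "n \<ge> 1" by simp
    obtain W where W: "\<And>a len. len \<ge> W \<Longrightarrow> \<not> det n a len" using no_long_det[OF n1] by blast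
    define sp where "sp i \<longleftrightarrow> (\<exists>i'. fw i n = fw i' n \<and> eps (i + int n) \<noteq> eps (i' + int n))" for i
    have "\<not> det n (k - int W) W" using W by simp
    then obtain i0 where i0: "k - int W \<le> i0" "i0 < k" "sp i0"
      unfolding det_def sp_def by auto
    define Sp where "Sp = {i. k - int W \<le> i \<and> i \<le> k \<and> sp i}"
    have finSp: "finite Sp" unfolding Sp_def by (rule finite_subset[of _ "{k - int W..k}"]) auto
    have "i0 \<in> Sp" using i0 by (simp add: Sp_def)
    define j where "j = Max Sp"
    have jSp: "j \<in> Sp" using finSp \<open>i0 \<in> Sp\<close> j_def Max_in by blast
    then have jk: "j \<le> k" and spj: "sp j" by (auto simp: Sp_def)
    have jmax: "\<not> sp i" if "j < i" "i \<le> k" for i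
    proof
      assume "sp i"
      then have "i \<in> Sp" using that jSp by (auto simp: Sp_def)
      then have "i \<le> j" using Max_ge[OF finSp] j_def by simp
      then show False using that by simp
    qed
    define c where "c = eps (j + int n)"
    have occ: "\<exists>i. a \<le> i \<and> i < a + int W \<and> fw i n = fw j n \<and> eps (i + int n) = c" for a
    proof (rule ccontr)
      assume A: "\<not> ?thesis"
      have "det n a W" unfolding det_def
      proof (intro allI impI, rule ccontr)
        fix i i' assume h: "a \<le> i" "i < a + int W" "a \<le> i'" "i' < a + int W" "fw i n = fw i' n"
          "eps (i + int n) \<noteq> eps (i' + int n)"
        obtain j' where j': "fw j n = fw j' n" "eps (j + int n) \<noteq> eps (j' + int n)"
          using spj sp_def by blast
        have e1: "fw i n = fw j n" using RS_unique[OF h(5,6) j'] .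
        have "c = eps (i + int n) \<or> c = eps (i' + int n)" using letter_cases2[OF h(6)] by blast
        moreover have "fw i' n = fw j n" using e1 h(5) by simp
        ultimately show False using A h(1-4) e1 by blast
      qed
      then show False using W by simp
    qed
    define D where "D = nat (k - j)"
    have follow: "\<And>i. fw i n = fw j n \<Longrightarrow> eps (i + int n) = c \<Longrightarrow> s \<le> D \<Longrightarrow>
        (\<forall>t<n. eps (i + int s + int t) = eps (j + int s + int t))" for s
    proof (induction s)
      case 0
      then show ?case by (simp add: fw_eq_iff)
    next
      case (Suc s)
      then have IH: "\<forall>t<n. eps (i + int s + int t) = eps (j + int s + int t)" by simp
      have ext: "eps (i + int s + int n) = eps (j + int s + int n)"
      proof (cases "s = 0")
        case True then show ?thesis using Suc.prems c_def by simp
      next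
        case False
        have "\<not> sp (j + int s)" using jmax False Suc.prems(3) D_def by simp
        moreover have "fw (j + int s) n = fw (i + int s) n" using IH by (simp add: fw_eq_iff add.assoc)
        ultimately show ?thesis unfolding sp_def by (auto simp: add.assoc)
      qed
      show ?case
      proof (intro allI impI)
        fix t assume "t < n"
        show "eps (i + int (Suc s) + int t) = eps (j + int (Suc s) + int t)"
        proof (cases "Suc t < n")
          case True
          then show ?thesis using IH[rule_format, of "Suc t"] by (simp add: algebra_simps)
        next
          case False
          then have "Suc t = n" using \<open>t < n\<close> by simp
          then show ?thesis using ext by (simp add: \<open>Suc t = n\<close>[symmetric] algebra_simps)
        qed
      qed
    qed
    show ?thesis
    proof (intro exI[of _ "W + D + n"] allI impI)
      fix a m assume m: "W + D + n \<le> m"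
      obtain i where i: "a \<le> i" "i < a + int W" "fw i n = fw j n" "eps (i + int n) = c" using occ by blast
      have "\<forall>t<n. eps (i + int D + int t) = eps (j + int D + int t)" using follow[OF i(3,4), of D] by simp
      then have "occurs_at w eps (i + int D)" using k jk
        by (simp add: occurs_at_def n_def D_def)
      moreover have "a \<le> i + int D" "i + int D + int (length w) \<le> a + int m" using i m n_def by auto
      ultimately show "\<exists>k. a \<le> k \<and> k + int (length w) \<le> a + int m \<and> occurs_at w eps k" by blast
    qed
  qed
qed

end

locale vidx = stu +
  fixes nidx :: "int \<Rightarrow> int"
  assumes sm: "strict_mono nidx" and rg: "range nidx = {n. eps n = V}"
begin

lemma eps_nidx: "eps (nidx t) = V" using rg by auto

lemma V_nidx: "eps x = V \<Longrightarrow> \<exists>t. x = nidx t" using rg by auto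

lemma nidx_less: "nidx x < nidx y \<longleftrightarrow> x < y" using sm strict_mono_less by blast

lemma nidx_le: "nidx x \<le> nidx y \<longleftrightarrow> x \<le> y" using sm strict_mono_less_eq by blast

lemma between_H:
  assumes "nidx i < y" "y < nidx (i + 1)" shows "eps y = H"
proof (rule ccontr)
  assume "eps y \<noteq> H"
  then have "eps y = V" by (cases "eps y") auto
  then obtain t where "y = nidx t" using V_nidx by blast
  then show False using assms nidx_less by auto
qed

lemma gap_pos: "nidx (i + 1) - nidx i \<ge> 1"
  using nidx_less[of i "i+1"] by simp

lemma win: "length u = n \<Longrightarrow> (\<forall>t<n. eps (k + int t) = u ! t) \<Longrightarrow> u \<in> subwords eps n"
  unfolding subwords_def by (auto intro!: exI[of _ k] nth_equalityI)

lemma gap_bound: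
  assumes M: "M = (LEAST m. \<exists>i. nidx (i + 1) - nidx i - 1 = int m)"
  shows "nidx (i + 1) - nidx i \<ge> int M + 1 \<and> nidx (i + 1) - nidx i \<le> int M + 2"
proof -
  define g where "g i = nidx (i + 1) - nidx i" for i
  have ex: "\<exists>i. nidx (i + 1) - nidx i - 1 = int (nat (g 0 - 1))"
    using gap_pos[of 0] by (intro exI[of _ 0]) (auto simp: g_def)
  have lower: "g i \<ge> int M + 1" for i
  proof -
    have "M \<le> nat (g i - 1)" unfolding M using gap_pos[of i] g_def by (intro Least_le) auto
    then show ?thesis using gap_pos[of i] unfolding g_def by linarith
  qed
  obtain i0 where i0: "nidx (i0 + 1) - nidx i0 - 1 = int M"
    using LeastI_ex[OF exI[of "\<lambda>m. \<exists>i. nidx (i + 1) - nidx i - 1 = int m"]] ex M by metis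
  have upper: "g j \<le> int M + 2" for j
  proof (rule ccontr)
    assume "\<not> g j \<le> int M + 2"
    then have gj: "g j \<ge> int M + 3" by simp
    define ws where "ws s = map (\<lambda>t. if t = s then V else H) [0..<M+2]" for s
    define HH where "HH = map (\<lambda>t::nat. H) [0..<M+2]"
    define VHV where "VHV = map (\<lambda>t. if t = 0 \<or> t = M + 1 then V else H) [0..<M+2]"
    have wsin: "ws s \<in> subwords eps (M+2)" if "g (i - 1) > int s" "g i > int M + 1 - int s" "s \<le> M + 1"
      for s i
    proof (rule win)
      show "length (ws s) = M + 2" by (simp add: ws_def del: upt_Suc)
      show "\<forall>t<M + 2. eps (nidx i - int s + int t) = ws s ! t"
      proof (intro allI impI)
        fix t assume t: "t < M + 2"
        show "eps (nidx i - int s + int t) = ws s ! t"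
        proof (cases "t = s")
          case True then show ?thesis using eps_nidx t by (simp add: ws_def del: upt_Suc)
        next
          case False
          have "eps (nidx i - int s + int t) = H"
          proof (cases "t < s")
            case True
            then show ?thesis using between_H[of "i - 1" "nidx i - int s + int t"] that(1) g_def by auto
          next
            case False
            then show ?thesis using between_H[of i "nidx i - int s + int t"] that(2) g_def \<open>t \<noteq> s\<close> t
              by auto
          qed
          then show ?thesis using t False by (simp add: ws_def del: upt_Suc)
        qed
      qed
    qed
    have "ws s \<in> subwords eps (M+2)" if "s \<le> M + 1" for s
    proof (cases "s = 0")
      case True
      then show ?thesis using wsin[of 0 j] gj gap_pos[of "j - 1"] g_def by simp
    next
      case False
      show ?thesis
      proof (cases "s = M + 1")
        case True
        then show ?thesis using wsin[of s "j + 1"] gj gap_pos[of "j + 1"] g_def by simp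
      next
        case False
        then show ?thesis using wsin[of s i0] lower[of "i0 - 1"] lower[of i0] \<open>s \<noteq> 0\<close> that by simp
      qed
    qed
    then have A1: "ws ` {0..M+1} \<subseteq> subwords eps (M+2)" by auto
    have A2: "HH \<in> subwords eps (M+2)"
    proof (rule win)
      show "length HH = M + 2" by (simp add: HH_def del: upt_Suc)
      show "\<forall>t<M + 2. eps (nidx j + 1 + int t) = HH ! t"
        using between_H[of j] gj g_def by (auto simp: HH_def simp del: upt_Suc)
    qed
    have A3: "VHV \<in> subwords eps (M+2)"
    proof (rule win)
      show "length VHV = M + 2" by (simp add: VHV_def del: upt_Suc)
      show "\<forall>t<M + 2. eps (nidx i0 + int t) = VHV ! t"
      proof (intro allI impI)
        fix t assume t: "t < M + 2"
        show "eps (nidx i0 + int t) = VHV ! t"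
        proof (cases "t = 0 \<or> t = M + 1")
          case True
          have eq: "nidx i0 + int (M + 1) = nidx (i0 + 1)" using i0 by simp
          have "VHV ! t = V" using True t by (auto simp: VHV_def simp del: upt_Suc)
          then show ?thesis using True eps_nidx[of i0] eps_nidx[of "i0 + 1"] eq by auto
        next
          case False
          then show ?thesis using between_H[of i0 "nidx i0 + int t"] i0 t by (auto simp: VHV_def simp del: upt_Suc)
        qed
      qed
    qed
    have wsn: "t < M + 2 \<Longrightarrow> ws s ! t = (if t = s then V else H)" for s t by (simp add: ws_def del: upt_Suc)
    have inj: "inj_on ws {0..M+1}"
    proof (rule inj_onI)
      fix x y assume "x \<in> {0..M+1}" "y \<in> {0..M+1}" "ws x = ws y"
      then show "x = y" using wsn[of x x] wsn[of y x] wsn[of x y] wsn[of y y] by (auto split: if_splits)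
    qed
    have hhn: "t < M + 2 \<Longrightarrow> HH ! t = H" for t by (simp add: HH_def del: upt_Suc)
    have vvn: "t < M + 2 \<Longrightarrow> VHV ! t = (if t = 0 \<or> t = M + 1 then V else H)" for t
      by (simp add: VHV_def del: upt_Suc)
    have n1: "HH \<notin> ws ` {0..M+1}"
    proof
      assume "HH \<in> ws ` {0..M+1}"
      then obtain s where "s \<le> M + 1" "HH = ws s" by auto
      then show False using wsn[of s s] hhn[of s] by simp
    qed
    have n2: "VHV \<notin> ws ` {0..M+1}"
    proof
      assume "VHV \<in> ws ` {0..M+1}"
      then obtain s where s: "s \<le> M + 1" "VHV = ws s" by auto
      then have "ws s ! 0 = V" using vvn[of 0] by simp
      then have "s = 0" using wsn[of 0 s] wsn[of s 0] by (auto split: if_splits)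
      then show False using s wsn[of "M+1" 0] wsn[of 0 "M+1"] vvn[of "M+1"] by auto
    qed
    have n3: "VHV \<noteq> HH" using vvn[of 0] hhn[of 0] by auto
    have "card (insert VHV (insert HH (ws ` {0..M+1}))) = M + 4"
      using inj n1 n2 n3 by (simp add: card_image)
    moreover have "insert VHV (insert HH (ws ` {0..M+1})) \<subseteq> subwords eps (M+2)"
      using A1 A2 A3 by auto
    ultimately have "M + 4 \<le> card (subwords eps (M+2))" using sub_fin by (metis card_mono)
    then show False using sub_card[of "M+2"] by simp
  qed
  show ?thesis using lower upper g_def by simp
qed

end

locale lift = stu +
  fixes d :: nat and h v :: "nat \<Rightarrow> nat" and lam :: "int \<Rightarrow> nat"
  assumes hp: "h permutes {1..d}" and vp: "v permutes {1..d}" and cl: "comb_lift d h v eps lam"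
begin

definition fc :: "letter \<Rightarrow> nat \<Rightarrow> nat" where "fc c = (if c = H then h else v)"

lemma fc_perm: "fc c permutes {1..d}" using hp vp by (simp add: fc_def)

primrec fwd :: "nat \<Rightarrow> nat \<Rightarrow> nat" where
  "fwd 0 = id" | "fwd (Suc m) = fc (eps (int m + 1)) \<circ> fwd m"

primrec bwd :: "nat \<Rightarrow> nat \<Rightarrow> nat" where
  "bwd 0 = id" | "bwd (Suc m) = inv (fc (eps (- int m))) \<circ> bwd m"

definition Pi :: "int \<Rightarrow> nat \<Rightarrow> nat" where
  "Pi n = (if n \<ge> 0 then fwd (nat n) else bwd (nat (- n)))"

lemma fwd_perm: "fwd m permutes {1..d}"
proof (induction m)
  case 0 then show ?case by (simp only: fwd.simps bwd.simps permutes_id)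
next
  case (Suc m) show ?case unfolding fwd.simps by (rule permutes_compose[OF Suc fc_perm])
qed

lemma bwd_perm: "bwd m permutes {1..d}"
proof (induction m)
  case 0 then show ?case by (simp only: fwd.simps bwd.simps permutes_id)
next
  case (Suc m) show ?case unfolding bwd.simps by (rule permutes_compose[OF Suc permutes_inv[OF fc_perm]])
qed

lemma Pi_perm: "Pi n permutes {1..d}"
  using fwd_perm bwd_perm by (simp add: Pi_def)

lemma Pi_step: "Pi (n + 1) = fc (eps (n + 1)) \<circ> Pi n"
proof (cases "n \<ge> 0")
  case True
  then have "nat (n + 1) = Suc (nat n)" by simp
  then show ?thesis using True by (simp add: Pi_def)
next
  case False
  define m where "m = nat (- n - 1)"
  have n1: "nat (- n) = Suc m" using False m_def by simp
  have A: "Pi n = inv (fc (eps (n + 1))) \<circ> bwd m"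
    using False n1 by (simp add: Pi_def m_def add.commute)
  have B: "Pi (n + 1) = bwd m"
    using False by (cases "n = -1") (auto simp: Pi_def m_def)
  have "fc (eps (n + 1)) \<circ> Pi n = (fc (eps (n + 1)) \<circ> inv (fc (eps (n + 1)))) \<circ> bwd m"
    using A by (simp add: o_assoc)
  also have "\<dots> = bwd m" using permutes_inv_o(1)[OF fc_perm] by simp
  finally show ?thesis using B by simp
qed

lemma lam_step: "lam (n + 1) = fc (eps (n + 1)) (lam n)"
  using cl unfolding comb_lift_def fc_def by simp

lemma fc_inj: "inj (fc c)" using fc_perm permutes_inj by blast

lemma lam_Pi: "lam n = Pi n (lam 0)"
proof (induction n rule: int_induct[where k = 0])
  case base then show ?case by (simp add: Pi_def)
next
  case (step1 i)
  have "lam (i + 1) = fc (eps (i + 1)) (lam i)" by (rule lam_step)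
  also have "\<dots> = fc (eps (i + 1)) (Pi i (lam 0))" using step1(2) by (rule arg_cong)
  also have "\<dots> = Pi (i + 1) (lam 0)" unfolding Pi_step[of i] by (rule comp_apply[symmetric])
  finally show ?case .
next
  case (step2 i)
  have e1: "lam i = fc (eps i) (lam (i - 1))" using lam_step[of "i - 1"] by simp
  have e2: "Pi i = fc (eps i) \<circ> Pi (i - 1)" using Pi_step[of "i - 1"] by simp
  have "fc (eps i) (lam (i - 1)) = fc (eps i) (Pi (i - 1) (lam 0))"
    using step2(2) e1 e2 by (metis comp_apply)
  then show ?case using fc_inj injD by metis
qed

lemma Pi_shift:
  "(\<forall>s. 1 \<le> s \<and> s \<le> t \<longrightarrow> eps (a + int s) = eps (q + int s)) \<Longrightarrow>
    Pi (q + int t) = Pi (a + int t) \<circ> inv (Pi a) \<circ> Pi q"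
proof (induction t)
  case 0
  have "Pi a \<circ> inv (Pi a) = id" using permutes_inv_o(1)[OF Pi_perm] .
  then show ?case by (simp add: o_assoc)
next
  case (Suc t)
  have IH: "Pi (q + int t) = Pi (a + int t) \<circ> inv (Pi a) \<circ> Pi q"
    by (rule Suc.IH) (use Suc.prems in auto)
  have e: "eps (a + int t + 1) = eps (q + int t + 1)" using Suc.prems[rule_format, of "Suc t"]
    by (simp add: algebra_simps)
  have qq: "q + int (Suc t) = (q + int t) + 1" by simp
  have "Pi (q + int (Suc t)) = fc (eps (q + int t + 1)) \<circ> Pi (q + int t)"
    unfolding qq by (rule Pi_step)
  also have "\<dots> = fc (eps (a + int t + 1)) \<circ> Pi (a + int t) \<circ> inv (Pi a) \<circ> Pi q"
    using IH e by (simp add: o_assoc)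
  also have "\<dots> = Pi (a + int (Suc t)) \<circ> inv (Pi a) \<circ> Pi q"
  proof -
    have aa: "a + int (Suc t) = (a + int t) + 1" by simp
    show ?thesis unfolding aa Pi_step[of "a + int t"] by (simp add: o_assoc)
  qed
  finally show ?case .
qed

lemma lam_follow:
  assumes "lam j = lam k" "\<forall>s. 1 \<le> s \<and> s < l \<longrightarrow> eps (j + int s) = eps (k + int s)"
  shows "t < l \<Longrightarrow> lam (j + int t) = lam (k + int t)"
proof (induction t)
  case 0 then show ?case using assms by simp
next
  case (Suc t)
  then have "lam (j + int t) = lam (k + int t)" by simp
  moreover have "eps (j + int t + 1) = eps (k + int t + 1)"
    using assms(2)[rule_format, of "Suc t"] Suc.prems by (simp add: algebra_simps)
  ultimately show ?case using lam_step[of "j + int t"] lam_step[of "k + int t"] by (simp add: algebra_simps)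
qed

end

context lift begin

lemma min_pair: "minimal_seq (\<lambda>n. (lam n, eps n))"
  unfolding minimal_seq_def
proof (intro allI impI)
  fix w :: "(nat \<times> letter) list"
  assume "\<exists>k. occurs_at w (\<lambda>n. (lam n, eps n)) k"
  then obtain k where k: "occurs_at w (\<lambda>n. (lam n, eps n)) k" by blast
  define l where "l = length w"
  have kw: "\<And>t. t < l \<Longrightarrow> w ! t = (lam (k + int t), eps (k + int t))"
    using k by (simp add: occurs_at_def l_def)
  show "\<exists>N. \<forall>a m. N \<le> m \<longrightarrow> (\<exists>k. a \<le> k \<and> k + int (length w) \<le> a + int m \<and>
      occurs_at w (\<lambda>n. (lam n, eps n)) k)"
  proof (cases "l = 0")
    case True
    then show ?thesis by (intro exI[of _ 0]) (auto simp: occurs_at_def l_def)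
  next
    case False
    then have l1: "l \<ge> 1" by simp
    define occ where "occ j \<longleftrightarrow> (\<forall>t<l. eps (j + int t) = eps (k + int t))" for j
    define RS where "RS a len = {Pi j | j. a \<le> j \<and> j + int l \<le> a + int len \<and> occ j}" for a len
    define PS where "PS = {p. p permutes {1..(d::nat)}}"
    have finPS: "finite PS" unfolding PS_def by (rule finite_permutations) simp
    have RSsub: "RS a len \<subseteq> PS" for a len using Pi_perm by (auto simp: RS_def PS_def)
    have finRS: "finite (RS a len)" for a len using finite_subset[OF RSsub finPS] .
    define CS where "CS = {card (RS a len) | a len. True}"
    have finCS: "finite CS"
    proof (rule finite_subset[of _ "{..card PS}"])
      show "CS \<subseteq> {..card PS}" using RSsub finPS card_mono by (force simp: CS_def)
    qed simp
    define m where "m = Max CS"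
    have "card (RS 0 0) \<in> CS" by (auto simp: CS_def)
    then have "m \<in> CS" using finCS m_def Max_in by blast
    then obtain a0 len0 where a0: "card (RS a0 len0) = m" by (auto simp: CS_def)
    have cle: "card (RS a len) \<le> m" for a len using finCS m_def by (auto simp: CS_def intro: Max_ge)
    have mono: "a' \<le> a \<Longrightarrow> a + int len \<le> a' + int len' \<Longrightarrow> RS a len \<subseteq> RS a' len'" for a a' len len'
      by (auto simp: RS_def)
    have eqmax: "X = RS a len" if "X \<subseteq> RS a len" "card X \<ge> m" for X a len
    proof -
      have "card X \<le> card (RS a len)" using card_mono[OF finRS that(1)] .
      then have "card X = card (RS a len)" using cle[of a len] that(2) by simp
      then show ?thesis using card_subset_eq[OF finRS that(1)] by simp
    qed
    have same: "RS q len0 = RS a0 len0" if qw: "\<forall>t<len0. eps (q + int t) = eps (a0 + int t)" for q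
    proof -
      define S where "S = inv (Pi a0) \<circ> Pi q"
      have Sp: "S permutes {1..d}" unfolding S_def
        by (rule permutes_compose[OF Pi_perm permutes_inv[OF Pi_perm]])
      have Ssurj: "surj S" using Sp permutes_surj by blast
      define psi where "psi g = g \<circ> S" for g :: "nat \<Rightarrow> nat"
      have injpsi: "inj psi"
      proof (rule injI)
        fix g1 g2 assume "psi g1 = psi g2"
        then have "g1 \<circ> S = g2 \<circ> S" by (simp add: psi_def)
        then show "g1 = g2" using Ssurj by (metis fun.inj_map_strong surj_iff o_assoc comp_id)
      qed
      have img: "psi ` RS a0 len0 \<subseteq> RS q len0"
      proof
        fix x assume "x \<in> psi ` RS a0 len0"
        then obtain j where j: "x = psi (Pi j)" "a0 \<le> j" "j + int l \<le> a0 + int len0" "occ j"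
          by (auto simp: RS_def)
        define t' where "t' = nat (j - a0)"
        have jt: "j = a0 + int t'" using j(2) t'_def by simp
        have t'l: "t' + l \<le> len0" using j(3) jt by simp
        have "Pi (q + int t') = Pi (a0 + int t') \<circ> inv (Pi a0) \<circ> Pi q"
        proof (rule Pi_shift, intro allI impI)
          fix s assume "1 \<le> s \<and> s \<le> t'"
          then have "s < len0" using t'l l1 by simp
          then show "eps (a0 + int s) = eps (q + int s)" using qw by simp
        qed
        then have "x = Pi (q + int t')" using j(1) jt by (simp add: psi_def S_def o_assoc)
        moreover have "occ (q + int t')"
          unfolding occ_def
        proof (intro allI impI)
          fix t assume "t < l"
          have "eps (q + int t' + int t) = eps (a0 + int (t' + t))"
            using qw[rule_format, of "t' + t"] \<open>t < l\<close> t'l by (simp add: add.assoc)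
          also have "\<dots> = eps (j + int t)" using jt by (simp add: add.assoc)
          also have "\<dots> = eps (k + int t)" using j(4) \<open>t < l\<close> by (simp add: occ_def)
          finally show "eps (q + int t' + int t) = eps (k + int t)" .
        qed
        moreover have "q \<le> q + int t'" "q + int t' + int l \<le> q + int len0" using t'l by auto
        ultimately show "x \<in> RS q len0" by (auto simp: RS_def)
      qed
      have c1: "card (RS q len0) \<ge> m"
      proof -
        have "card (psi ` RS a0 len0) = m" using injpsi a0 by (simp add: card_image inj_on_subset)
        then show ?thesis using card_mono[OF finRS img] by simp
      qed
      define ah where "ah = min a0 q"
      define lh where "lh = nat (max (a0 + int len0) (q + int len0) - ah)"
      have h1: "RS a0 len0 \<subseteq> RS ah lh" by (rule mono) (auto simp: ah_def lh_def)
      have h2: "RS q len0 \<subseteq> RS ah lh" by (rule mono) (auto simp: ah_def lh_def)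
      have "RS a0 len0 = RS ah lh" using eqmax[OF h1] a0 by simp
      moreover have "RS q len0 = RS ah lh" using eqmax[OF h2] c1 by simp
      ultimately show ?thesis by simp
    qed
    have Pik: "Pi k \<in> RS a0 len0"
    proof -
      define ah where "ah = min a0 k"
      define lh where "lh = nat (max (a0 + int len0) (k + int l) - ah)"
      have h1: "RS a0 len0 \<subseteq> RS ah lh" by (rule mono) (auto simp: ah_def lh_def)
      have "Pi k \<in> RS ah lh" unfolding RS_def occ_def by (auto simp: ah_def lh_def)
      then show ?thesis using eqmax[OF h1] a0 by simp
    qed
    define W0 where "W0 = map (\<lambda>t. eps (a0 + int t)) [0..<len0]"
    have "occurs_at W0 eps a0" by (simp add: occurs_at_def W0_def)
    then obtain N0 where N0: "\<And>a m'. N0 \<le> m' \<Longrightarrow> \<exists>q. a \<le> q \<and> q + int (length W0) \<le> a + int m' \<and>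
        occurs_at W0 eps q" using min_eps unfolding minimal_seq_def by meson
    show ?thesis
    proof (intro exI[of _ N0] allI impI)
      fix a m' assume "N0 \<le> m'"
      then obtain q where q: "a \<le> q" "q + int len0 \<le> a + int m'" "occurs_at W0 eps q"
        using N0 by (auto simp: W0_def)
      have qw: "\<forall>t<len0. eps (q + int t) = eps (a0 + int t)" using q(3) by (simp add: occurs_at_def W0_def)
      have "Pi k \<in> RS q len0" using same[OF qw] Pik by simp
      then obtain j where j: "Pi k = Pi j" "q \<le> j" "j + int l \<le> q + int len0" "occ j"
        by (auto simp: RS_def)
      have lj: "lam j = lam k" using j(1) lam_Pi[of j] lam_Pi[of k] by simp
      have ejk: "\<forall>s. 1 \<le> s \<and> s < l \<longrightarrow> eps (j + int s) = eps (k + int s)" using j(4) by (simp add: occ_def)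
      have "occurs_at w (\<lambda>n. (lam n, eps n)) j"
        unfolding occurs_at_def
      proof (intro allI impI)
        fix t assume t: "t < length w"
        then have "lam (j + int t) = lam (k + int t)" using lam_follow[OF lj ejk] l_def by simp
        moreover have "eps (j + int t) = eps (k + int t)" using j(4) t by (simp add: occ_def l_def)
        ultimately show "(lam (j + int t), eps (j + int t)) = w ! t" using kw t l_def by simp
      qed
      moreover have "a \<le> j" "j + int (length w) \<le> a + int m'" using j q l_def by auto
      ultimately show "\<exists>k. a \<le> k \<and> k + int (length w) \<le> a + int m' \<and>
          occurs_at w (\<lambda>n. (lam n, eps n)) k" by blast
    qed
  qed
qed

end

context vidx begin

lemma nidx_grow: "nidx (a + int t) \<ge> nidx a + int t"
proof (induction t)
  case 0 then show ?case by simp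
next
  case (Suc t)
  have "nidx (a + int t + 1) - nidx (a + int t) \<ge> 1" by (rule gap_pos)
  moreover have "a + int (Suc t) = a + int t + 1" by simp
  ultimately show ?case using Suc by (simp only:)
qed

lemma next_V:
  assumes "nidx i = y" "g > 0" "\<forall>s. 0 < s \<and> s < g \<longrightarrow> eps (y + s) = H" "eps (y + g) = V"
  shows "nidx (i + 1) = y + g"
proof -
  obtain t' where t': "y + g = nidx t'" using V_nidx assms(4) by blast
  then have "i < t'" using assms(1,2) nidx_less by (metis less_add_same_cancel1)
  then have le: "nidx (i + 1) \<le> y + g" using t' nidx_le by simp
  show ?thesis
  proof (rule ccontr)
    assume "nidx (i + 1) \<noteq> y + g"
    then have "nidx (i + 1) < y + g" using le by simp
    moreover have "nidx (i + 1) > y" using assms(1) nidx_less[of i "i + 1"] by simp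
    ultimately have "eps (y + (nidx (i + 1) - y)) = H" using assms(3)[rule_format, of "nidx (i + 1) - y"] by simp
    then show False using eps_nidx[of "i + 1"] by simp
  qed
qed

end


theorem corollary5p6:
  fixes d :: nat and h v :: "nat \<Rightarrow> nat" and eps :: "int \<Rightarrow> letter" and lam :: "int \<Rightarrow> nat"
    and nidx :: "int \<Rightarrow> int" and M :: nat
    and mu :: "int \<Rightarrow> nat" and sigma :: "int \<Rightarrow> side"
  assumes "h permutes {1..d}" and "v permutes {1..d}"
    and "sturmian eps"
    and "comb_lift d h v eps lam"
    and "strict_mono nidx" and "range nidx = {n. eps n = V}"
    and "M = (LEAST m. \<exists>i. nidx (i + 1) - nidx i - 1 = int m)"
    and "\<And>i. mu i = lam (nidx i)"
    and "\<And>i. nidx (i + 1) - nidx i = int M + 1 \<Longrightarrow> sigma i = L"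
    and "\<And>i. nidx (i + 1) - nidx i = int M + 2 \<Longrightarrow> sigma i = R"
  shows "minimal_seq (\<lambda>i. (mu i, sigma i))"
proof -
  interpret stu eps using assms(3) by unfold_locales
  interpret vidx eps nidx using assms(3,5,6) by unfold_locales
  interpret lift eps d h v lam using assms(1-4) by unfold_locales
  define gap where "gap i = nidx (i + 1) - nidx i" for i
  have gb: "gap i = int M + 1 \<or> gap i = int M + 2" for i
    using gap_bound[OF assms(7), of i] by (auto simp: gap_def)
  have sig: "sigma i = sigma i'" if "gap i = gap i'" for i i'
  proof -
    have "gap i = int M + 1 \<or> gap i = int M + 2" using gb by simp
    then show ?thesis
    proof
      assume "gap i = int M + 1"
      then show ?thesis using that assms(9)[of i] assms(9)[of i'] by (simp add: gap_def)
    next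
      assume "gap i = int M + 2"
      then show ?thesis using that assms(10)[of i] assms(10)[of i'] by (simp add: gap_def)
    qed
  qed
  show ?thesis unfolding minimal_seq_def
  proof (intro allI impI)
    fix w :: "(nat \<times> side) list"
    assume "\<exists>k. occurs_at w (\<lambda>i. (mu i, sigma i)) k"
    then obtain k where k: "occurs_at w (\<lambda>i. (mu i, sigma i)) k" by blast
    define l where "l = length w"
    have kw: "\<And>t. t < l \<Longrightarrow> w ! t = (mu (k + int t), sigma (k + int t))"
      using k by (simp add: occurs_at_def l_def)
    define P where "P = nidx k"
    define Q where "Q = nidx (k + int l)"
    have PQ: "P \<le> Q" using nidx_le by (simp add: P_def Q_def)
    define lu where "lu = nat (Q - P) + 1"
    define U where "U = map (\<lambda>t. (lam (P + int t), eps (P + int t))) [0..<lu]"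
    have "occurs_at U (\<lambda>n. (lam n, eps n)) P" by (simp add: occurs_at_def U_def)
    then obtain N where N: "\<And>a m. N \<le> m \<Longrightarrow> \<exists>x. a \<le> x \<and> x + int (length U) \<le> a + int m \<and>
        occurs_at U (\<lambda>n. (lam n, eps n)) x"
      using min_pair unfolding minimal_seq_def by meson
    show "\<exists>N. \<forall>a m. N \<le> m \<longrightarrow> (\<exists>k. a \<le> k \<and> k + int (length w) \<le> a + int m \<and>
        occurs_at w (\<lambda>i. (mu i, sigma i)) k)"
    proof (intro exI[of _ N] allI impI)
      fix a m assume Nm: "N \<le> m"
      have grow: "nidx a + int m \<le> nidx (a + int m)" by (rule nidx_grow)
      obtain x where x: "nidx a \<le> x" "x + int lu \<le> nidx a + int N" "occurs_at U (\<lambda>n. (lam n, eps n)) x"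
        using N[of N "nidx a"] by (auto simp: U_def)
      have agree: "lam (x + (y - P)) = lam y \<and> eps (x + (y - P)) = eps y" if "P \<le> y" "y \<le> Q" for y
      proof -
        define t where "t = nat (y - P)"
        have "t < lu" using that by (simp add: t_def lu_def)
        then have "(lam (x + int t), eps (x + int t)) = U ! t" using x(3) by (simp add: occurs_at_def U_def)
        also have "\<dots> = (lam (P + int t), eps (P + int t))" using \<open>t < lu\<close> by (simp add: U_def)
        finally show ?thesis using that by (simp add: t_def)
      qed
      have "eps x = V" using agree[of P] PQ eps_nidx[of k] by (simp add: P_def)
      then obtain i where xi: "x = nidx i" using V_nidx by blast
      have ia: "a \<le> i" using x(1) xi nidx_le by simp
      have idx: "t \<le> l \<Longrightarrow> nidx (i + int t) = x + (nidx (k + int t) - P)" for t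
      proof (induction t)
        case 0 then show ?case using xi by (simp add: P_def)
      next
        case (Suc t)
        then have IH: "nidx (i + int t) = x + (nidx (k + int t) - P)" by simp
        define y where "y = nidx (i + int t)"
        define g where "g = nidx (k + int t + 1) - nidx (k + int t)"
        have lo: "P \<le> nidx (k + int t)" using nidx_le by (simp add: P_def)
        have hi: "nidx (k + int t + 1) \<le> Q" using nidx_le Suc.prems by (simp add: Q_def)
        have g0: "g > 0" using gap_pos[of "k + int t"] by (simp add: g_def)
        have Hs: "\<forall>s. 0 < s \<and> s < g \<longrightarrow> eps (y + s) = H"
        proof (intro allI impI)
          fix s assume s: "0 < s \<and> s < g"
          have "eps (x + (nidx (k + int t) + s - P)) = eps (nidx (k + int t) + s)"
            using agree[of "nidx (k + int t) + s"] lo hi s by (simp add: g_def)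
          moreover have "eps (nidx (k + int t) + s) = H"
            using between_H[of "k + int t" "nidx (k + int t) + s"] s by (simp add: g_def)
          moreover have "y + s = x + (nidx (k + int t) + s - P)" using IH by (simp add: y_def)
          ultimately show "eps (y + s) = H" by (metis (no_types))
        qed
        have Vg: "eps (y + g) = V"
        proof -
          have "eps (x + (nidx (k + int t + 1) - P)) = eps (nidx (k + int t + 1))"
            using agree[of "nidx (k + int t + 1)"] lo hi g0 by (simp add: g_def)
          moreover have "y + g = x + (nidx (k + int t + 1) - P)" using IH by (simp add: y_def g_def)
          ultimately show ?thesis using eps_nidx[of "k + int t + 1"] by (metis (no_types))
        qed
        have "nidx (i + int t + 1) = y + g" using next_V[OF y_def[symmetric] g0 Hs Vg] .
        then show ?case using IH by (simp add: y_def g_def algebra_simps)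
      qed
      have "occurs_at w (\<lambda>i. (mu i, sigma i)) i"
        unfolding occurs_at_def
      proof (intro allI impI)
        fix t assume t: "t < length w"
        have i1: "nidx (i + int t) = x + (nidx (k + int t) - P)" using idx t l_def by simp
        have i2: "nidx (i + int t + 1) = x + (nidx (k + int t + 1) - P)"
        proof -
          have eqs: "i + int t + 1 = i + int (Suc t)" "k + int t + 1 = k + int (Suc t)" by simp_all
          have "nidx (i + int (Suc t)) = x + (nidx (k + int (Suc t)) - P)" using idx[of "Suc t"] t l_def by simp
          then show ?thesis unfolding eqs .
        qed
        have lo: "P \<le> nidx (k + int t)" using nidx_le by (simp add: P_def)
        have hi: "nidx (k + int t) \<le> Q" using nidx_le t by (simp add: Q_def l_def)
        have "mu (i + int t) = mu (k + int t)"
          using assms(8) i1 agree[OF lo hi] by simp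
        moreover have "gap (i + int t) = gap (k + int t)" using i1 i2 by (simp add: gap_def)
        then have "sigma (i + int t) = sigma (k + int t)" by (rule sig)
        ultimately show "(mu (i + int t), sigma (i + int t)) = w ! t" using kw t l_def by simp
      qed
      moreover have "i + int (length w) \<le> a + int m"
      proof -
        have "nidx (i + int l) = x + (Q - P)" using idx[of l] by (simp add: Q_def)
        also have "\<dots> < nidx (a + int m)" using x(2) Nm grow PQ by (simp add: lu_def)
        finally show ?thesis using nidx_less l_def by simp
      qed
      ultimately show "\<exists>k. a \<le> k \<and> k + int (length w) \<le> a + int m \<and>
          occurs_at w (\<lambda>i. (mu i, sigma i)) k" using ia by blast
    qed
  qed
qed

end
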